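(* Let $f_1,\dots,f_r\in\mathbb{R}[x]$ and $g_1,\dots,g_t\in\mathbb{R}[y]$ be real polynomials in $x\in\mathbb{R}^n$ and $y\in\mathbb{R}^m$, let $A\in\mathbb{R}^{m\times n}$, and set $h_j(x):=g_j(Ax)$. Let $C=\{x\in\mathbb{R}^n: f_i(x)\ge 0,\ i=1,\dots,r\}$, $H=\{x\in\mathbb{R}^n: h_j(x)\ge 0,\ j=1,\dots,t\}$, $d:=\max_{i,j}\{\lceil \deg(f_i)/2\rceil,\lceil\deg(h_j)/2\rceil\}$, and for $k\ge d$ $$S_k:=\Big\{x\in\mathbb{R}^n:\ \exists\, y\in\mathbb{R}^{\mathbb{N}^n_{2k}} \text{ with } y_0=1,\ x=(y_{e_1},\dots,y_{e_n}),\ L^{(k)}_{f_i}[y]\succeq 0\ (i=0,1,\dots,r),\ L^{(k)}_{h_j}[y]\succeq 0\ (j=1,\dots,t)\Big\},$$ where $f_0:=1$. Assume that all the polynomials $f_1,\dots,f_r,h_1,\dots,h_t$ (as polynomials in $x$) are sos-concave. Then $S_k=C\cap H$ for all $k\ge d$.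
   Context: $\mathbb{N}^n_{k}=\{\alpha\in\mathbb{N}^n: |\alpha|\le k\}$, and $\mathbb{R}^{\mathbb{N}^n_{2k}}$ is the space of real vectors $y=(y_\alpha)_{\alpha\in\mathbb{N}^n_{2k}}$. $[x]_s$ is the column vector of all monomials $x^\alpha$ with $|\alpha|\le s$. $e_i$ is the $i$-th unit vector and $0$ the zero multi-index. Localizing matrix: for a polynomial $f$ with $\deg f\le 2k$, let $s=k-\lceil\deg(f)/2\rceil$ and expand $f(x)[x]_s[x]_s^T=\sum_{\alpha\in\mathbb{N}^n_{2k}}x^\alpha F_\alpha$ with symmetric matrices $F_\alpha$; then $L^{(k)}_f[y]:=\sum_\alpha y_\alpha F_\alpha$. A polynomial $f\in\mathbb{R}[x]$ is sos-convex if there is a matrix polynomial $P(x)\in\mathbb{R}[x]^{\ell\times n}$ (some $\ell$) with $\nabla^2 f(x)=P(x)^TP(x)$; $f$ is sos-concave if $-f$ is sos-convex. No assumption is made that $C$ or $H$ has nonempty interior. *)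

theory Defs
  imports "HOL-Analysis.Analysis" "HOL-Library.Poly_Mapping"
begin

text \<open>Variables are indexed by natural numbers; a polynomial in
 x in R^n uses only the variables 0,...,n-1.  Points of R^n are functions
 nat => real vanishing outside {..<n}.\<close>

type_synonym mon = "nat \<Rightarrow>\<^sub>0 nat"
type_synonym mpoly = "mon \<Rightarrow>\<^sub>0 real"

definition mdeg :: "mon \<Rightarrow> nat" where
  "mdeg \<alpha> = (\<Sum>i\<in>Poly_Mapping.keys \<alpha>. Poly_Mapping.lookup \<alpha> i)"

definition pdeg :: "mpoly \<Rightarrow> nat" where
  "pdeg p = Max (insert 0 (mdeg ` Poly_Mapping.keys p))"

definition vars_in :: "nat \<Rightarrow> mpoly \<Rightarrow> bool" where
  "vars_in n p \<longleftrightarrow> (\<forall>\<alpha>\<in>Poly_Mapping.keys p. Poly_Mapping.keys \<alpha> \<subseteq> {..<n})"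

definition peval :: "mpoly \<Rightarrow> (nat \<Rightarrow> real) \<Rightarrow> real" where
  "peval p x = (\<Sum>\<alpha>\<in>Poly_Mapping.keys p. Poly_Mapping.lookup p \<alpha> * (\<Prod>i\<in>Poly_Mapping.keys \<alpha>. x i ^ Poly_Mapping.lookup \<alpha> i))"

definition Rn :: "nat \<Rightarrow> (nat \<Rightarrow> real) set" where
  "Rn n = {x. \<forall>i\<ge>n. x i = 0}"

definition Var :: "nat \<Rightarrow> mpoly" where
  "Var k = Poly_Mapping.single (Poly_Mapping.single k 1) 1"

definition Const :: "real \<Rightarrow> mpoly" where
  "Const c = Poly_Mapping.single 0 c"

text \<open>Substitution y := A x, where A is m x n (entries A i k, i<m, k<n).\<close>
definition lin_subst :: "nat \<Rightarrow> (nat \<Rightarrow> nat \<Rightarrow> real) \<Rightarrow> mpoly \<Rightarrow> mpoly" where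
  "lin_subst n A g = (\<Sum>\<alpha>\<in>Poly_Mapping.keys g. Const (Poly_Mapping.lookup g \<alpha>) *
      (\<Prod>i\<in>Poly_Mapping.keys \<alpha>. (\<Sum>k<n. Const (A i k) * Var k) ^ Poly_Mapping.lookup \<alpha> i))"

definition pd :: "nat \<Rightarrow> mpoly \<Rightarrow> mpoly" where
  "pd i p = (\<Sum>\<alpha>\<in>Poly_Mapping.keys p. Poly_Mapping.single (\<alpha> - Poly_Mapping.single i 1)
                (Poly_Mapping.lookup p \<alpha> * of_nat (Poly_Mapping.lookup \<alpha> i)))"

text \<open>sos-convex: Hessian = P^T P for some l x n matrix polynomial P in R[x].\<close>
definition sos_convex :: "nat \<Rightarrow> mpoly \<Rightarrow> bool" where
  "sos_convex n f \<longleftrightarrow> (\<exists>(l::nat) (P :: nat \<Rightarrow> nat \<Rightarrow> mpoly).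
      (\<forall>a<l. \<forall>b<n. vars_in n (P a b)) \<and>
      (\<forall>i<n. \<forall>j<n. pd i (pd j f) = (\<Sum>a<l. P a i * P a j)))"

definition sos_concave :: "nat \<Rightarrow> mpoly \<Rightarrow> bool" where
  "sos_concave n f \<longleftrightarrow> sos_convex n (- f)"

definition Nk :: "nat \<Rightarrow> nat \<Rightarrow> mon set" where
  "Nk n k = {\<alpha>. Poly_Mapping.keys \<alpha> \<subseteq> {..<n} \<and> mdeg \<alpha> \<le> k}"

text \<open>Entry (beta,gamma) of L_f^(k)[y]: sum over alpha of y_alpha (F_alpha)_(beta,gamma),
 where f x^beta x^gamma = sum_delta f_delta x^(delta+beta+gamma).\<close>
definition loc_entry :: "mpoly \<Rightarrow> (mon \<Rightarrow> real) \<Rightarrow> mon \<Rightarrow> mon \<Rightarrow> real" where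
  "loc_entry f y \<beta> \<gamma> = (\<Sum>\<delta>\<in>Poly_Mapping.keys f. Poly_Mapping.lookup f \<delta> * y (\<delta> + \<beta> + \<gamma>))"

text \<open>L_f^(k)[y] is positive semidefinite; rows/columns indexed by N^n_s,
 s = k - ceil(deg f / 2).\<close>
definition loc_psd :: "nat \<Rightarrow> nat \<Rightarrow> mpoly \<Rightarrow> (mon \<Rightarrow> real) \<Rightarrow> bool" where
  "loc_psd n k f y \<longleftrightarrow> (let s = k - (pdeg f + 1) div 2 in
      \<forall>v :: mon \<Rightarrow> real. 0 \<le> (\<Sum>\<beta>\<in>Nk n s. \<Sum>\<gamma>\<in>Nk n s. v \<beta> * v \<gamma> * loc_entry f y \<beta> \<gamma>))"

end

theory Submission
  imports Defs
begin


abbreviation lk :: "('a \<Rightarrow>\<^sub>0 'b::zero) \<Rightarrow> 'a \<Rightarrow> 'b" where "lk \<equiv> Poly_Mapping.lookup"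
abbreviation ks :: "('a \<Rightarrow>\<^sub>0 'b::zero) \<Rightarrow> 'a set" where "ks \<equiv> Poly_Mapping.keys"
abbreviation sg :: "'a \<Rightarrow> 'b \<Rightarrow> ('a \<Rightarrow>\<^sub>0 'b::zero)" where "sg \<equiv> Poly_Mapping.single"

lemma keys_add_mon: "ks ((a::mon) + b) = ks a \<union> ks b"
  by (auto simp: in_keys_iff lookup_add)

lemma lookup_sum_single: "finite A \<Longrightarrow> lk (\<Sum>a\<in>A. sg a (f a)) b = (if b \<in> A then f b else 0)"
  by (simp add: lookup_sum lookup_single when_def)

lemma poly_expand:
  assumes "finite A" "ks p \<subseteq> A"
  shows "p = (\<Sum>a\<in>A. sg a (lk p a))"
proof (rule poly_mapping_eqI)
  fix b show "lk p b = lk (\<Sum>a\<in>A. sg a (lk p a)) b"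
    using assms by (auto simp: lookup_sum_single in_keys_iff)
qed

lemma mult_expand:
  fixes p q :: "('a::monoid_add \<Rightarrow>\<^sub>0 'b::semiring_0)"
  assumes "finite A" "ks p \<subseteq> A" "finite B" "ks q \<subseteq> B"
  shows "p * q = (\<Sum>a\<in>A. \<Sum>b\<in>B. sg (a + b) (lk p a * lk q b))"
proof -
  have "p * q = (\<Sum>a\<in>A. sg a (lk p a)) * (\<Sum>b\<in>B. sg b (lk q b))"
    using poly_expand[OF assms(1,2)] poly_expand[OF assms(3,4)] by simp
  also have "\<dots> = (\<Sum>a\<in>A. \<Sum>b\<in>B. sg (a + b) (lk p a * lk q b))"
    by (simp add: sum_product mult_single)
  finally show ?thesis .
qed

definition mval :: "(nat \<Rightarrow> 'b::comm_ring_1) \<Rightarrow> mon \<Rightarrow> 'b" where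
  "mval F a = (\<Prod>i\<in>ks a. F i ^ lk a i)"

definition ev :: "(nat \<Rightarrow> 'b::comm_ring_1) \<Rightarrow> (real \<Rightarrow> 'b) \<Rightarrow> mpoly \<Rightarrow> 'b" where
  "ev F h p = (\<Sum>a\<in>ks p. h (lk p a) * mval F a)"

definition rhom :: "(real \<Rightarrow> 'b::comm_ring_1) \<Rightarrow> bool" where
  "rhom h \<longleftrightarrow> (\<forall>a b. h (a + b) = h a + h b) \<and> (\<forall>a b. h (a * b) = h a * h b) \<and> h 0 = 0 \<and> h 1 = 1"

lemma mval_superset: "finite S \<Longrightarrow> ks a \<subseteq> S \<Longrightarrow> mval F a = (\<Prod>i\<in>S. F i ^ lk a i)"
  unfolding mval_def by (rule prod.mono_neutral_left) (auto simp: in_keys_iff)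

lemma mval_add: "mval F (a + b) = mval F a * mval F b"
proof -
  let ?S = "ks a \<union> ks b"
  have "mval F (a + b) = (\<Prod>i\<in>?S. F i ^ lk (a + b) i)"
    by (rule mval_superset) (auto simp: keys_add_mon)
  also have "\<dots> = (\<Prod>i\<in>?S. F i ^ lk a i) * (\<Prod>i\<in>?S. F i ^ lk b i)"
    by (simp add: lookup_add power_add prod.distrib)
  also have "\<dots> = mval F a * mval F b"
    using mval_superset[of ?S a F] mval_superset[of ?S b F] by auto
  finally show ?thesis .
qed

lemma mval_zero [simp]: "mval F 0 = 1" by (simp add: mval_def)
lemma mval_single [simp]: "mval F (sg i k) = F i ^ k"
  by (cases "k = 0") (simp_all add: mval_def)

lemma ev_superset:
  assumes "finite A" "ks p \<subseteq> A" "h 0 = 0"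
  shows "ev F h p = (\<Sum>a\<in>A. h (lk p a) * mval F a)"
  unfolding ev_def using assms by (intro sum.mono_neutral_left) (auto simp: in_keys_iff)

lemma ev_add: assumes "rhom h" shows "ev F h (p + q) = ev F h p + ev F h q"
proof -
  let ?A = "ks p \<union> ks q"
  have h0: "h 0 = 0" using assms by (simp add: rhom_def)
  have "ev F h (p + q) = (\<Sum>a\<in>?A. h (lk (p + q) a) * mval F a)"
    using keys_add[of p q] by (intro ev_superset h0) auto
  also have "\<dots> = (\<Sum>a\<in>?A. h (lk p a) * mval F a) + (\<Sum>a\<in>?A. h (lk q a) * mval F a)"
    using assms by (simp add: rhom_def lookup_add distrib_right sum.distrib)
  also have "\<dots> = ev F h p + ev F h q"
    using h0 ev_superset[of ?A p h F] ev_superset[of ?A q h F] by auto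
  finally show ?thesis .
qed

lemma ev_zero [simp]: "ev F h 0 = 0" by (simp add: ev_def)

lemma ev_sum: assumes "rhom h" shows "ev F h (\<Sum>a\<in>A. p a) = (\<Sum>a\<in>A. ev F h (p a))"
  by (induction A rule: infinite_finite_induct) (simp_all add: ev_add[OF assms])

lemma ev_single: assumes "rhom h" shows "ev F h (sg a c) = h c * mval F a"
  using assms by (cases "c = 0") (simp_all add: ev_def rhom_def)

lemma ev_mult: assumes "rhom h" shows "ev F h (p * q) = ev F h p * ev F h q"
proof -
  have h0: "h 0 = 0" using assms by (simp add: rhom_def)
  have "ev F h (p * q) = ev F h (\<Sum>a\<in>ks p. \<Sum>b\<in>ks q. sg (a + b) (lk p a * lk q b))"
    by (subst mult_expand[of "ks p" p "ks q" q]) auto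
  also have "\<dots> = (\<Sum>a\<in>ks p. \<Sum>b\<in>ks q. (h (lk p a) * mval F a) * (h (lk q b) * mval F b))"
    using assms by (simp add: ev_sum ev_single mval_add rhom_def mult_ac)
  also have "\<dots> = ev F h p * ev F h q"
    by (simp add: ev_def sum_product)
  finally show ?thesis .
qed

lemma ev_one: assumes "rhom h" shows "ev F h 1 = 1"
  using ev_single[OF assms, where a=0 and c=1] assms by (simp add: rhom_def)

lemma ev_power: assumes "rhom h" shows "ev F h (p ^ k) = ev F h p ^ k"
  by (induction k) (simp_all add: ev_one ev_mult assms)

lemma ev_prod: assumes "rhom h" shows "ev F h (\<Prod>a\<in>A. p a) = (\<Prod>a\<in>A. ev F h (p a))"
  by (induction A rule: infinite_finite_induct) (simp_all add: ev_one ev_mult assms)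

lemma ev_uminus: assumes "rhom h" shows "ev F h (- p) = - ev F h p"
proof -
  have "ev F h p + ev F h (- p) = 0" using ev_add[OF assms, of F p "-p"] by simp
  thus ?thesis by (simp add: add_eq_0_iff)
qed

lemma ev_diff: assumes "rhom h" shows "ev F h (p - q) = ev F h p - ev F h q"
  using ev_add[OF assms, of F p "-q"] ev_uminus[OF assms] by simp

lemma Const_add: "Const (a + b) = Const a + Const b" by (simp add: Const_def single_add)
lemma Const_mult: "Const (a * b) = Const a * Const b" by (simp add: Const_def mult_single)
lemma Const_zero [simp]: "Const 0 = 0" by (simp add: Const_def)
lemma Const_one [simp]: "Const 1 = 1" by (simp add: Const_def)

lemma rhom_Const: "rhom Const" by (simp add: rhom_def Const_add Const_mult)
lemma rhom_id: "rhom (\<lambda>x. x)" by (simp add: rhom_def)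
lemma rhom_id': "rhom id" by (simp add: rhom_def)

lemma ev_Const: assumes "rhom h" shows "ev F h (Const c) = h c"
  by (simp add: Const_def ev_single assms)
lemma ev_Var: assumes "rhom h" shows "ev F h (Var i) = F i"
  using assms by (simp add: Var_def ev_single rhom_def)

lemma peval_ev: "peval p x = ev x (\<lambda>a. a) p"
  by (simp add: peval_def ev_def mval_def)


lemma ev_compose:
  assumes "rhom h"
  shows "ev F h (ev G Const p) = ev (\<lambda>i. ev F h (G i)) h p"
proof -
  have "ev F h (ev G Const p) = (\<Sum>a\<in>ks p. h (lk p a) * ev F h (mval G a))"
    by (simp add: ev_def[of G Const p] ev_sum[OF assms] ev_mult[OF assms] ev_Const[OF assms])
  also have "\<dots> = ev (\<lambda>i. ev F h (G i)) h p"
    by (simp add: mval_def ev_prod[OF assms] ev_power[OF assms] ev_def[of "\<lambda>i. ev F h (G i)" h p])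
  finally show ?thesis .
qed

lemma Var_power: "Var i ^ k = sg (sg i k) 1"
proof (induction k)
  case 0 then show ?case by simp
next
  case (Suc k)
  have "Var i ^ Suc k = sg (sg i 1 + sg i k) 1"
    by (simp only: power_Suc Suc) (simp add: Var_def mult_single)
  also have "sg i 1 + sg i k = sg i (Suc k)" by (simp add: single_add[symmetric])
  finally show ?case .
qed

lemma prod_single_one: "(\<Prod>i\<in>S. sg (f i) (1::real)) = sg (\<Sum>i\<in>S. f i) 1"
  by (induction S rule: infinite_finite_induct) (simp_all add: mult_single)

lemma mval_Var: "mval Var a = sg a 1"
proof -
  have "mval Var a = sg (\<Sum>i\<in>ks a. sg i (lk a i)) 1"
    by (simp add: mval_def Var_power prod_single_one)
  also have "(\<Sum>i\<in>ks a. sg i (lk a i)) = a" by (rule poly_expand[symmetric]) auto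
  finally show ?thesis .
qed

lemma Const_mult_single: "Const c * sg a d = sg a (c * d)"
  by (simp add: Const_def mult_single)

lemma ev_Var_id: "ev Var Const p = p"
  by (simp add: ev_def mval_Var Const_mult_single poly_expand[of "ks p" p, symmetric])

lemma lookup_Const_mult: "lk (Const c * p) a = c * lk p a"
proof -
  have "Const c * p = Const c * (\<Sum>b\<in>ks p. sg b (lk p b))"
    by (subst poly_expand[of "ks p" p]) auto
  also have "\<dots> = (\<Sum>b\<in>ks p. sg b (c * lk p b))"
    by (simp add: sum_distrib_left Const_mult_single)
  finally show ?thesis by (auto simp: lookup_sum_single in_keys_iff)
qed

lemma mdeg_superset: "finite S \<Longrightarrow> ks a \<subseteq> S \<Longrightarrow> mdeg a = (\<Sum>i\<in>S. lk a i)"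
  unfolding mdeg_def by (rule sum.mono_neutral_left) (auto simp: in_keys_iff)

lemma mdeg_add: "mdeg (a + b) = mdeg a + mdeg b"
proof -
  let ?S = "ks a \<union> ks b"
  have "mdeg (a + b) = (\<Sum>i\<in>?S. lk (a + b) i)"
    by (rule mdeg_superset) (auto simp: keys_add_mon)
  also have "\<dots> = (\<Sum>i\<in>?S. lk a i) + (\<Sum>i\<in>?S. lk b i)"
    by (simp add: lookup_add sum.distrib)
  also have "\<dots> = mdeg a + mdeg b"
    using mdeg_superset[of ?S a] mdeg_superset[of ?S b] by auto
  finally show ?thesis .
qed

lemma mdeg_zero [simp]: "mdeg 0 = 0" by (simp add: mdeg_def)
lemma mdeg_single [simp]: "mdeg (sg i k) = k" by (cases "k = 0") (simp_all add: mdeg_def)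

lemma mdeg_eq_0: "mdeg a = 0 \<longleftrightarrow> a = 0"
proof
  assume "mdeg a = 0"
  then have "\<forall>i\<in>ks a. lk a i = 0" by (simp add: mdeg_def)
  then have "\<forall>i. lk a i = 0" by (auto simp: in_keys_iff)
  then show "a = 0" by (intro poly_mapping_eqI) simp
qed simp

lemma lookup_le_mdeg: "lk a i \<le> mdeg a"
proof (cases "i \<in> ks a")
  case True then show ?thesis unfolding mdeg_def by (intro member_le_sum) auto
qed (simp add: in_keys_iff)

lemma mon_split:
  assumes "i \<in> ks (a::mon)"
  shows "a = (a - sg i 1) + sg i 1"
  using assms by (intro poly_mapping_eqI) (auto simp: lookup_add lookup_minus lookup_single when_def in_keys_iff)

lemma mon_induct:
  assumes "P 0" "\<And>a i. P a \<Longrightarrow> P (a + sg i 1)"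
  shows "P (a::mon)"
proof (induction "mdeg a" arbitrary: a)
  case 0 then show ?case using assms(1) by (simp add: mdeg_eq_0)
next
  case (Suc k)
  then have "a \<noteq> 0" by auto
  then obtain i where i: "i \<in> ks a" by (metis keys_eq_empty ex_in_conv)
  let ?b = "a - sg i 1"
  have ab: "a = ?b + sg i 1" by (rule mon_split[OF i])
  then have "mdeg a = mdeg ?b + 1" by (metis mdeg_add mdeg_single)
  then have "P ?b" using Suc by auto
  then have "P (?b + sg i 1)" by (rule assms(2))
  then show ?case using ab by simp
qed

lemma vars_in_add: "vars_in n p \<Longrightarrow> vars_in n q \<Longrightarrow> vars_in n (p + q)"
  unfolding vars_in_def using keys_add[of p q] by blast

lemma vars_in_mult: "vars_in n p \<Longrightarrow> vars_in n q \<Longrightarrow> vars_in n (p * q)"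
  unfolding vars_in_def using keys_mult[of p q] by (force simp: keys_add_mon)

lemma vars_in_zero [simp]: "vars_in n 0" by (simp add: vars_in_def)
lemma vars_in_one [simp]: "vars_in n 1" by (simp add: vars_in_def)
lemma vars_in_Const [simp]: "vars_in n (Const c)" by (simp add: vars_in_def Const_def)
lemma vars_in_Var: "i < n \<Longrightarrow> vars_in n (Var i)" by (simp add: vars_in_def Var_def)
lemma vars_in_uminus [simp]: "vars_in n (- p) = vars_in n p" by (simp add: vars_in_def keys_minus)
lemma vars_in_diff: "vars_in n p \<Longrightarrow> vars_in n q \<Longrightarrow> vars_in n (p - q)"
  using vars_in_add[of n p "-q"] by simp
lemma vars_in_sum: "(\<And>a. a \<in> A \<Longrightarrow> vars_in n (p a)) \<Longrightarrow> vars_in n (\<Sum>a\<in>A. p a)"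
  by (induction A rule: infinite_finite_induct) (simp_all add: vars_in_add)
lemma vars_in_prod: "(\<And>a. a \<in> A \<Longrightarrow> vars_in n (p a)) \<Longrightarrow> vars_in n (\<Prod>a\<in>A. p a)"
  by (induction A rule: infinite_finite_induct) (simp_all add: vars_in_mult)
lemma vars_in_power: "vars_in n p \<Longrightarrow> vars_in n (p ^ k)"
  by (induction k) (simp_all add: vars_in_mult)

lemma vars_in_ev:
  assumes "vars_in N p" "\<And>i. i < N \<Longrightarrow> vars_in n (F i)"
  shows "vars_in n (ev F Const p)"
  unfolding ev_def mval_def using assms(1)
  by (intro vars_in_sum vars_in_mult vars_in_Const vars_in_prod vars_in_power assms(2))
     (auto simp: vars_in_def)

definition degle :: "nat \<Rightarrow> mpoly \<Rightarrow> bool" where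
  "degle d p \<longleftrightarrow> (\<forall>a\<in>ks p. mdeg a \<le> d)"

lemma degle_add: "degle d p \<Longrightarrow> degle d q \<Longrightarrow> degle d (p + q)"
  unfolding degle_def using keys_add[of p q] by blast
lemma degle_mult: "degle d p \<Longrightarrow> degle e q \<Longrightarrow> degle (d + e) (p * q)"
  unfolding degle_def using keys_mult[of p q] by (force simp: mdeg_add intro: add_mono)
lemma degle_mono: "degle d p \<Longrightarrow> d \<le> e \<Longrightarrow> degle e p"
  unfolding degle_def by force
lemma degle_zero [simp]: "degle d 0" by (simp add: degle_def)
lemma degle_one [simp]: "degle d 1" by (simp add: degle_def)
lemma degle_Const [simp]: "degle d (Const c)" by (simp add: degle_def Const_def)
lemma degle_Var: "degle 1 (Var i)" by (simp add: degle_def Var_def)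
lemma degle_uminus [simp]: "degle d (- p) = degle d p" by (simp add: degle_def keys_minus)
lemma degle_diff: "degle d p \<Longrightarrow> degle d q \<Longrightarrow> degle d (p - q)"
  using degle_add[of d p "-q"] by simp
lemma degle_sum: "(\<And>a. a \<in> A \<Longrightarrow> degle d (p a)) \<Longrightarrow> degle d (\<Sum>a\<in>A. p a)"
  by (induction A rule: infinite_finite_induct) (simp_all add: degle_add)
lemma degle_prod: "(\<And>a. a \<in> A \<Longrightarrow> degle (d a) (p a)) \<Longrightarrow> degle (\<Sum>a\<in>A. d a) (\<Prod>a\<in>A. p a)"
  by (induction A rule: infinite_finite_induct) (simp_all add: degle_mult)
lemma degle_power: "degle d p \<Longrightarrow> degle (k * d) (p ^ k)"
  by (induction k) (simp_all add: degle_mult)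

lemma degle_ev:
  assumes "degle d p" "\<And>i. degle 1 (F i)"
  shows "degle d (ev F Const p)"
  unfolding ev_def
proof (intro degle_sum)
  fix a assume a: "a \<in> ks p"
  have "degle (0 + mdeg a) (Const (lk p a) * mval F a)"
    unfolding mval_def mdeg_def
    by (intro degle_mult degle_Const degle_prod) (metis assms(2) degle_power mult.right_neutral)
  then show "degle d (Const (lk p a) * mval F a)"
    using assms(1) a by (fastforce simp: degle_def intro: order_trans)
qed

lemma degle_pdeg: "degle (pdeg p) p"
  unfolding degle_def pdeg_def by (auto intro: Max_ge)
lemma pdeg_le: "degle d p \<Longrightarrow> pdeg p \<le> d"
  unfolding degle_def pdeg_def by (auto intro: Max.boundedI)

lemma pd_single: "pd i (sg a c) = sg (a - sg i 1) (c * of_nat (lk a i))"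
  by (cases "c = 0") (simp_all add: pd_def)

lemma mon_sub_eq:
  assumes "lk (a::mon) i \<noteq> 0"
  shows "a - sg i 1 = b \<longleftrightarrow> a = b + sg i 1"
proof
  assume "a - sg i 1 = b" then show "a = b + sg i 1"
    using mon_split[of i a] assms by (simp add: in_keys_iff)
next
  assume "a = b + sg i 1" then show "a - sg i 1 = b"
    by (intro poly_mapping_eqI) (simp add: lookup_add lookup_minus)
qed

lemma lookup_pd: "lk (pd i p) b = lk p (b + sg i 1) * of_nat (lk b i + 1)"
proof -
  have "lk (pd i p) b = (\<Sum>a\<in>ks p. if a = b + sg i 1 then lk p a * of_nat (lk b i + 1) else 0)"
    unfolding pd_def lookup_sum
  proof (intro sum.cong refl)
    fix a assume "a \<in> ks p"
    show "lk (sg (a - sg i 1) (lk p a * of_nat (lk a i))) b =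
      (if a = b + sg i 1 then lk p a * of_nat (lk b i + 1) else 0)"
    proof (cases "lk a i = 0")
      case True
      then have "a \<noteq> b + sg i 1" by (auto simp: lookup_add)
      with True show ?thesis by (simp add: lookup_single)
    next
      case False
      then show ?thesis using mon_sub_eq[OF False, of b]
        by (auto simp: lookup_single when_def lookup_add)
    qed
  qed
  also have "\<dots> = lk p (b + sg i 1) * of_nat (lk b i + 1)"
    by (auto simp: in_keys_iff)
  finally show ?thesis .
qed

lemma pd_add: "pd i (p + q) = pd i p + pd i q"
  by (intro poly_mapping_eqI) (simp add: lookup_pd lookup_add distrib_right)
lemma pd_zero [simp]: "pd i 0 = 0"
  by (simp add: pd_def)
lemma pd_sum: "pd i (\<Sum>a\<in>A. p a) = (\<Sum>a\<in>A. pd i (p a))"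
  by (induction A rule: infinite_finite_induct) (simp_all add: pd_add)
lemma pd_uminus: "pd i (- p) = - pd i p"
  by (intro poly_mapping_eqI) (simp add: lookup_pd)
lemma pd_diff: "pd i (p - q) = pd i p - pd i q"
  by (intro poly_mapping_eqI) (simp add: lookup_pd lookup_minus left_diff_distrib)
lemma pd_Const_mult: "pd i (Const c * p) = Const c * pd i p"
  by (intro poly_mapping_eqI) (simp add: lookup_pd lookup_Const_mult)
lemma pd_Const [simp]: "pd i (Const c) = 0"
  by (simp add: Const_def pd_single)
lemma pd_one [simp]: "pd i 1 = 0"
  using pd_Const[of i 1] by simp
lemma pd_Var: "pd i (Var j) = (if i = j then 1 else 0)"
  by (simp add: Var_def pd_single lookup_single when_def)

lemma pd_mult_single:
  "pd i (sg a c * sg b d) = pd i (sg a c) * sg b d + sg a c * pd i (sg b d)"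
proof -
  have e1: "sg (a + b - sg i 1) (c * d * of_nat (lk a i)) = sg (a - sg i 1 + b) (c * of_nat (lk a i) * d)"
  proof (cases "lk a i = 0")
    case False
    then have "a + b - sg i 1 = a - sg i 1 + b"
      by (intro poly_mapping_eqI) (auto simp add: lookup_add lookup_minus lookup_single when_def)
    then show ?thesis by (simp add: mult_ac)
  qed simp
  have e2: "sg (a + b - sg i 1) (c * d * of_nat (lk b i)) = sg (a + (b - sg i 1)) (c * (d * of_nat (lk b i)))"
  proof (cases "lk b i = 0")
    case False
    then have "a + b - sg i 1 = a + (b - sg i 1)"
      by (intro poly_mapping_eqI) (auto simp add: lookup_add lookup_minus lookup_single when_def)
    then show ?thesis by (simp add: mult_ac)
  qed simp
  have "pd i (sg a c * sg b d) = sg (a + b - sg i 1) (c * d * of_nat (lk a i)) + sg (a + b - sg i 1) (c * d * of_nat (lk b i))"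
    by (simp add: mult_single pd_single lookup_add single_add[symmetric] distrib_left)
  also have "\<dots> = pd i (sg a c) * sg b d + sg a c * pd i (sg b d)"
    by (simp only: e1 e2) (simp add: pd_single mult_single)
  finally show ?thesis .
qed

lemma pd_mult: "pd i (p * q) = pd i p * q + p * pd i q"
proof -
  have P: "p = (\<Sum>a\<in>ks p. sg a (lk p a))" and Q: "q = (\<Sum>b\<in>ks q. sg b (lk q b))"
    by (auto intro: poly_expand)
  have "pd i (p * q) = (\<Sum>a\<in>ks p. \<Sum>b\<in>ks q. pd i (sg a (lk p a) * sg b (lk q b)))"
    by (subst P, subst Q) (simp add: sum_product pd_sum)
  also have "\<dots> = (\<Sum>a\<in>ks p. \<Sum>b\<in>ks q. pd i (sg a (lk p a)) * sg b (lk q b))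
      + (\<Sum>a\<in>ks p. \<Sum>b\<in>ks q. sg a (lk p a) * pd i (sg b (lk q b)))"
    by (simp add: pd_mult_single sum.distrib)
  also have "\<dots> = pd i p * q + p * pd i q"
    by (subst (3 4) P, subst (3 4) Q) (simp add: sum_product pd_sum)
  finally show ?thesis .
qed




definition tr :: "(nat \<Rightarrow> real) \<Rightarrow> mpoly \<Rightarrow> mpoly" where
  "tr c p = ev (\<lambda>j. Var j + Const (c j)) Const p"

lemma tr_add: "tr c (p + q) = tr c p + tr c q" by (simp add: tr_def ev_add rhom_Const)
lemma tr_mult: "tr c (p * q) = tr c p * tr c q" by (simp add: tr_def ev_mult rhom_Const)
lemma tr_sum: "tr c (\<Sum>a\<in>A. p a) = (\<Sum>a\<in>A. tr c (p a))" by (simp add: tr_def ev_sum rhom_Const)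
lemma tr_Const [simp]: "tr c (Const a) = Const a" by (simp add: tr_def ev_Const rhom_Const)
lemma tr_one [simp]: "tr c 1 = 1" by (simp add: tr_def ev_one rhom_Const)
lemma tr_zero [simp]: "tr c 0 = 0" by (simp add: tr_def)
lemma tr_Var: "tr c (Var j) = Var j + Const (c j)" by (simp add: tr_def ev_Var rhom_Const)
lemma tr_uminus: "tr c (- p) = - tr c p" by (simp add: tr_def ev_uminus rhom_Const)

lemma poly_expand_Const: "p = (\<Sum>a\<in>ks p. Const (lk p a) * sg a 1)"
  by (simp add: Const_mult_single poly_expand[of "ks p" p, symmetric])

lemma tr_inv: "tr (\<lambda>j. - c j) (tr c p) = p"
proof -
  have "tr (\<lambda>j. - c j) (tr c p) = ev (\<lambda>j. tr (\<lambda>j. - c j) (Var j + Const (c j))) Const p"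
    unfolding tr_def by (rule ev_compose[OF rhom_Const])
  also have "(\<lambda>j. tr (\<lambda>j. - c j) (Var j + Const (c j))) = Var"
    by (rule ext) (simp add: tr_add tr_Var Const_add[symmetric])
  finally show ?thesis by (simp add: ev_Var_id)
qed

lemma pd_tr_mon: "pd i (tr c (sg a 1)) = tr c (pd i (sg a 1))"
proof (induction a rule: mon_induct)
  case 1 then show ?case by simp
next
  case (2 a j)
  have s: "sg (a + sg j 1) (1::real) = sg a 1 * Var j" by (simp add: Var_def mult_single)
  have v: "tr c (pd i (Var j)) = pd i (Var j)" by (simp add: pd_Var)
  have "pd i (tr c (sg (a + sg j 1) 1)) = pd i (tr c (sg a 1) * tr c (Var j))"
    by (simp only: s tr_mult)
  also have "\<dots> = tr c (pd i (sg a 1)) * tr c (Var j) + tr c (sg a 1) * pd i (Var j)"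
    by (simp add: pd_mult "2" tr_Var pd_add)
  also have "\<dots> = tr c (pd i (sg (a + sg j 1) 1))"
    by (simp only: s pd_mult tr_add tr_mult v)
  finally show ?case .
qed

lemma pd_tr: "pd i (tr c p) = tr c (pd i p)"
proof -
  have "pd i (tr c p) = (\<Sum>a\<in>ks p. Const (lk p a) * pd i (tr c (sg a 1)))"
    by (subst poly_expand_Const) (simp add: tr_sum tr_mult pd_sum pd_Const_mult)
  also have "\<dots> = tr c (pd i p)"
    by (subst (2) poly_expand_Const) (simp add: pd_tr_mon tr_sum tr_mult pd_sum pd_Const_mult)
  finally show ?thesis .
qed

lemma vars_in_tr: "vars_in n p \<Longrightarrow> vars_in n (tr c p)"
  unfolding tr_def by (rule vars_in_ev) (auto intro: vars_in_add vars_in_Var)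

lemma degle_Var_Const: "degle 1 (Var i + Const a)"
  by (rule degle_add[OF degle_Var degle_Const])

lemma degle_tr: "degle d p \<Longrightarrow> degle d (tr c p)"
  unfolding tr_def by (rule degle_ev, assumption, rule degle_Var_Const)

lemma peval_tr: "peval (tr c p) x = peval p (\<lambda>j. x j + c j)"
  unfolding peval_ev tr_def by (simp add: ev_compose rhom_id ev_add ev_Var ev_Const)

lemma mval_zero_fun: "mval (\<lambda>_. 0::real) a = (if a = 0 then 1 else 0)"
proof (cases "a = 0")
  case False
  then obtain i where "i \<in> ks a" by (metis keys_eq_empty ex_in_conv)
  then show ?thesis unfolding mval_def using False
    by (auto intro!: prod_zero bexI[of _ i] simp: in_keys_iff)
qed simp

lemma peval_at_zero: "peval p (\<lambda>_. 0) = lk p 0"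
  by (auto simp: peval_ev ev_def mval_zero_fun in_keys_iff if_distrib cong: if_cong)

(* linear functionals given by moment sequences *)
definition Lm :: "(mon \<Rightarrow> real) \<Rightarrow> mpoly \<Rightarrow> real" where
  "Lm y p = (\<Sum>a\<in>ks p. lk p a * y a)"

lemma Lm_superset: "finite A \<Longrightarrow> ks p \<subseteq> A \<Longrightarrow> Lm y p = (\<Sum>a\<in>A. lk p a * y a)"
  unfolding Lm_def by (rule sum.mono_neutral_left) (auto simp: in_keys_iff)

lemma Lm_add: "Lm y (p + q) = Lm y p + Lm y q"
proof -
  let ?A = "ks p \<union> ks q"
  have "Lm y (p + q) = (\<Sum>a\<in>?A. lk (p + q) a * y a)"
    using keys_add[of p q] by (intro Lm_superset) auto
  also have "\<dots> = (\<Sum>a\<in>?A. lk p a * y a) + (\<Sum>a\<in>?A. lk q a * y a)"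
    by (simp add: lookup_add distrib_right sum.distrib)
  also have "\<dots> = Lm y p + Lm y q"
    using Lm_superset[of ?A p y] Lm_superset[of ?A q y] by auto
  finally show ?thesis .
qed

lemma Lm_zero [simp]: "Lm y 0 = 0" by (simp add: Lm_def)
lemma Lm_sum: "Lm y (\<Sum>a\<in>A. p a) = (\<Sum>a\<in>A. Lm y (p a))"
  by (induction A rule: infinite_finite_induct) (simp_all add: Lm_add)
lemma Lm_single: "Lm y (sg a c) = c * y a"
  by (cases "c = 0") (simp_all add: Lm_def)
lemma Lm_Const_mult: "Lm y (Const c * p) = c * Lm y p"
proof -
  have "ks (Const c * p) \<subseteq> ks p" by (auto simp: in_keys_iff lookup_Const_mult)
  then have "Lm y (Const c * p) = (\<Sum>a\<in>ks p. lk (Const c * p) a * y a)"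
    by (intro Lm_superset) auto
  then show ?thesis by (simp only: Lm_def[of y p] lookup_Const_mult sum_distrib_left mult.assoc)
qed

lemma Lm_mult:
  assumes "finite A" "ks p \<subseteq> A" "finite B" "ks q \<subseteq> B"
  shows "Lm y (p * q) = (\<Sum>a\<in>A. \<Sum>b\<in>B. lk p a * lk q b * y (a + b))"
  by (simp add: mult_expand[OF assms] Lm_sum Lm_single)

lemma Lm_one: "Lm y 1 = y 0"
  using Lm_single[of y 0 1] by simp
lemma Lm_Var: "Lm y (Var i) = y (sg i 1)"
  by (simp add: Var_def Lm_single)
lemma Lm_uminus: "Lm y (- p) = - Lm y p"
  using Lm_add[of y p "-p"] by (simp add: add_eq_0_iff)

lemma Lm_tr: "Lm y (tr c p) = Lm (\<lambda>a. Lm y (tr c (sg a 1))) p"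
proof -
  have "Lm y (tr c p) = (\<Sum>a\<in>ks p. lk p a * Lm y (tr c (sg a 1)))"
    by (subst poly_expand_Const) (simp add: tr_sum tr_mult Lm_sum Lm_Const_mult)
  then show ?thesis by (simp add: Lm_def)
qed

(* Euler-type identity *)
lemma lookup_Var_mult: "lk (Var j * r) a = (if lk a j = 0 then 0 else lk r (a - sg j 1))"
proof -
  have "Var j * r = (\<Sum>b\<in>ks r. sg (sg j 1 + b) (lk r b))"
    by (subst poly_expand[of "ks r" r]) (auto simp: sum_distrib_left Var_def mult_single)
  then have e: "lk (Var j * r) a = (\<Sum>b\<in>ks r. if sg j 1 + b = a then lk r b else 0)"
    by (simp add: lookup_sum lookup_single when_def)
  show ?thesis
  proof (cases "lk a j = 0")
    case True
    then have "\<And>b. sg j 1 + b \<noteq> a" by (auto simp: lookup_add)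
    then show ?thesis using e True by simp
  next
    case False
    have "\<And>b. sg j 1 + b = a \<longleftrightarrow> b = a - sg j 1"
      using mon_sub_eq[OF False] by (metis add.commute)
    then show ?thesis using e False by (simp add: in_keys_iff)
  qed
qed

lemma lookup_Var_pd: "lk (Var i * pd i q) b = of_nat (lk b i) * lk q b"
proof (cases "lk b i = 0")
  case False
  have "b - sg i 1 + sg i 1 = b" using mon_split[of i b] False by (simp add: in_keys_iff)
  moreover have "lk (b - sg i 1) i + 1 = lk b i" using False by (simp add: lookup_minus)
  ultimately show ?thesis using False by (simp add: lookup_Var_mult lookup_pd mult.commute)
qed (simp add: lookup_Var_mult)

definition Eop :: "nat \<Rightarrow> mpoly \<Rightarrow> mpoly" where
  "Eop n G = (\<Sum>j<n. Var j * (\<Sum>i<n. Var i * pd i (pd j G)))"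

lemma sum_lookup_Var_pd:
  assumes "ks b \<subseteq> {..<n}"
  shows "lk (\<Sum>i<n. Var i * pd i q) b = of_nat (mdeg b) * lk q b"
  using mdeg_superset[of "{..<n}" b] assms
  by (simp add: lookup_sum lookup_Var_pd sum_distrib_right[symmetric])

lemma lookup_Eop:
  assumes "ks a \<subseteq> {..<n}"
  shows "lk (Eop n G) a = of_nat (mdeg a) * (of_nat (mdeg a) - 1) * lk G a"
proof -
  have tm: "lk (Var j * (\<Sum>i<n. Var i * pd i (pd j G))) a
      = (of_nat (mdeg a) - 1) * of_nat (lk a j) * lk G a" for j
  proof (cases "lk a j = 0")
    case False
    let ?b = "a - sg j 1"
    have ab: "a = ?b + sg j 1" using mon_split[of j a] False by (simp add: in_keys_iff)
    have "ks ?b \<subseteq> ks a" by (auto simp: in_keys_iff lookup_minus)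
    then have kb: "ks ?b \<subseteq> {..<n}" using assms by blast
    have md: "mdeg a = mdeg ?b + 1" using ab by (metis mdeg_add mdeg_single)
    have lj: "lk ?b j + 1 = lk a j" using False by (simp add: lookup_minus)
    have "lk (Var j * (\<Sum>i<n. Var i * pd i (pd j G))) a = of_nat (mdeg ?b) * lk (pd j G) ?b"
      using False sum_lookup_Var_pd[OF kb, of "pd j G"] by (simp add: lookup_Var_mult)
    also have "\<dots> = of_nat (mdeg ?b) * (lk G a * of_nat (lk a j))"
      using ab lj by (simp add: lookup_pd)
    finally show ?thesis using md by (simp add: algebra_simps)
  qed (simp add: lookup_Var_mult)
  have "lk (Eop n G) a = (\<Sum>j<n. (of_nat (mdeg a) - 1) * of_nat (lk a j) * lk G a)"
    by (simp add: Eop_def lookup_sum tm)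
  also have "\<dots> = (of_nat (mdeg a) - 1) * of_nat (\<Sum>j<n. lk a j) * lk G a"
    by (simp add: sum_distrib_left sum_distrib_right)
  also have "(\<Sum>j<n. lk a j) = mdeg a" using mdeg_superset[of "{..<n}" a] assms by simp
  finally show ?thesis by (simp add: mult_ac)
qed

lemma Eop_sos:
  assumes "\<And>i j. i < n \<Longrightarrow> j < n \<Longrightarrow> pd i (pd j G) = (\<Sum>a<l. Q a i * Q a j)"
  shows "Eop n G = (\<Sum>a<l. (\<Sum>i<n. Var i * Q a i) * (\<Sum>i<n. Var i * Q a i))"
proof -
  have "(\<Sum>a<l. (\<Sum>i<n. Var i * Q a i) * (\<Sum>j<n. Var j * Q a j))
      = (\<Sum>a<l. \<Sum>i<n. \<Sum>j<n. (Var i * Q a i) * (Var j * Q a j))"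
    by (simp only: sum_product)
  also have "\<dots> = (\<Sum>i<n. \<Sum>a<l. \<Sum>j<n. (Var i * Q a i) * (Var j * Q a j))"
    by (rule sum.swap)
  also have "\<dots> = (\<Sum>i<n. \<Sum>j<n. \<Sum>a<l. (Var i * Q a i) * (Var j * Q a j))"
    by (rule sum.cong[OF refl], rule sum.swap)
  also have "\<dots> = (\<Sum>i<n. \<Sum>j<n. Var j * (Var i * pd i (pd j G)))"
  proof (intro sum.cong refl)
    fix i j assume "i \<in> {..<n}" "j \<in> {..<n}"
    then have "pd i (pd j G) = (\<Sum>a<l. Q a i * Q a j)" using assms by auto
    then show "(\<Sum>a<l. (Var i * Q a i) * (Var j * Q a j)) = Var j * (Var i * pd i (pd j G))"
      by (simp add: sum_distrib_left ac_simps)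
  qed
  also have "\<dots> = (\<Sum>j<n. \<Sum>i<n. Var j * (Var i * pd i (pd j G)))"
    by (rule sum.swap)
  also have "\<dots> = Eop n G"
    by (simp only: Eop_def sum_distrib_left)
  finally show ?thesis by simp
qed




lemma lookup_mult_expand:
  assumes "finite A" "ks p \<subseteq> A" "finite B" "ks q \<subseteq> B"
  shows "lk (p * q) c = (\<Sum>a\<in>A. \<Sum>b\<in>B. if a + b = c then lk p a * lk q b else 0)"
  by (simp add: mult_expand[OF assms] lookup_sum lookup_single when_def)

lemma sos_degle:
  fixes w :: "'i \<Rightarrow> mpoly"
  assumes A: "finite A" and deg: "degle (2 * k) (\<Sum>a\<in>A. w a * w a)"
  shows "\<forall>a\<in>A. degle k (w a)"
proof (rule ccontr)
  assume "\<not> (\<forall>a\<in>A. degle k (w a))"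
  then obtain a0 b0 where a0: "a0 \<in> A" and b0: "b0 \<in> ks (w a0)" and kb0: "mdeg b0 > k"
    by (auto simp: degle_def not_le)
  define T where "T = (\<Union>a\<in>A. ks (w a))"
  have fT: "finite T" using A by (simp add: T_def)
  have b0T: "b0 \<in> T" using a0 b0 by (auto simp: T_def)
  define D where "D = Max (mdeg ` T)"
  have DT: "\<And>b. b \<in> T \<Longrightarrow> mdeg b \<le> D" using fT by (simp add: D_def)
  have kD: "k < D" using DT[OF b0T] kb0 by simp
  have "D \<in> mdeg ` T" unfolding D_def using fT b0T by (intro Max_in) auto
  define TD where "TD = {b\<in>T. mdeg b = D}"
  have fTD: "finite TD" using fT by (simp add: TD_def)
  have neTD: "TD \<noteq> {}" using \<open>D \<in> mdeg ` T\<close> by (auto simp: TD_def)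
  define \<mu> where "\<mu> = Max TD"
  have muTD: "\<mu> \<in> TD" using fTD neTD by (simp add: \<mu>_def)
  then have muT: "\<mu> \<in> T" and mdmu: "mdeg \<mu> = D" by (auto simp: TD_def)
  have le_mu: "\<And>b. b \<in> T \<Longrightarrow> mdeg b = D \<Longrightarrow> b \<le> \<mu>"
    using fTD by (simp add: \<mu>_def TD_def)
  have uniq: "b = \<mu> \<and> c = \<mu>" if "b \<in> T" "c \<in> T" "b + c = \<mu> + \<mu>" for b c
  proof -
    have "mdeg b + mdeg c = D + D" using that(3) mdmu by (metis mdeg_add)
    then have mb: "mdeg b = D" and mc: "mdeg c = D" using DT[OF that(1)] DT[OF that(2)] by auto
    have "b \<le> \<mu>" "c \<le> \<mu>" using le_mu that mb mc by auto
    show ?thesis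
    proof (rule ccontr)
      assume "\<not> (b = \<mu> \<and> c = \<mu>)"
      then have "b < \<mu> \<or> c < \<mu>" using \<open>b \<le> \<mu>\<close> \<open>c \<le> \<mu>\<close> by auto
      then have "b + c < \<mu> + \<mu>"
      proof
        assume "b < \<mu>"
        then have "b + c < \<mu> + c" by (rule add_strict_right_mono)
        also have "\<mu> + c \<le> \<mu> + \<mu>" using \<open>c \<le> \<mu>\<close> by (rule add_left_mono)
        finally show ?thesis .
      next
        assume "c < \<mu>"
        then have "b + c < b + \<mu>" by (rule add_strict_left_mono)
        also have "b + \<mu> \<le> \<mu> + \<mu>" using \<open>b \<le> \<mu>\<close> by (rule add_right_mono)
        finally show ?thesis .
      qed
      then show False using that(3) by simp
    qed
  qed
  have coef: "lk (\<Sum>a\<in>A. w a * w a) (\<mu> + \<mu>) = (\<Sum>a\<in>A. lk (w a) \<mu> * lk (w a) \<mu>)"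
  proof -
    have "lk (w a * w a) (\<mu> + \<mu>) = lk (w a) \<mu> * lk (w a) \<mu>" if "a \<in> A" for a
    proof -
      have sub: "ks (w a) \<subseteq> T" using that by (auto simp: T_def)
      have "lk (w a * w a) (\<mu> + \<mu>) = (\<Sum>b\<in>T. \<Sum>c\<in>T. if b + c = \<mu> + \<mu> then lk (w a) b * lk (w a) c else 0)"
        by (rule lookup_mult_expand[OF fT sub fT sub])
      also have "\<dots> = (\<Sum>b\<in>T. \<Sum>c\<in>T. if b = \<mu> \<and> c = \<mu> then lk (w a) b * lk (w a) c else 0)"
      proof (intro sum.cong refl)
        fix b c assume "b \<in> T" "c \<in> T"
        then have "b + c = \<mu> + \<mu> \<longleftrightarrow> b = \<mu> \<and> c = \<mu>" using uniq by blast
        then show "(if b + c = \<mu> + \<mu> then lk (w a) b * lk (w a) c else 0) =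
          (if b = \<mu> \<and> c = \<mu> then lk (w a) b * lk (w a) c else 0)" by (simp only:)
      qed
      also have "\<dots> = lk (w a) \<mu> * lk (w a) \<mu>"
      proof -
        have "(\<Sum>c\<in>T. if b = \<mu> \<and> c = \<mu> then lk (w a) b * lk (w a) c else 0)
            = (if b = \<mu> then lk (w a) \<mu> * lk (w a) \<mu> else 0)" for b
          using fT muT by (cases "b = \<mu>") (simp_all add: sum.delta)
        then show ?thesis using fT muT by (simp add: sum.delta)
      qed
      finally show ?thesis .
    qed
    then show ?thesis by (simp add: lookup_sum)
  qed
  obtain a1 where a1: "a1 \<in> A" "\<mu> \<in> ks (w a1)" using muT by (auto simp: T_def)
  have "0 < (\<Sum>a\<in>A. lk (w a) \<mu> * lk (w a) \<mu>)"
    using a1 A by (intro sum_pos2[of A a1]) (auto simp: in_keys_iff zero_less_mult_iff linorder_neq_iff)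
  then have "\<mu> + \<mu> \<in> ks (\<Sum>a\<in>A. w a * w a)" using coef by (simp add: in_keys_iff)
  then have "mdeg (\<mu> + \<mu>) \<le> 2 * k" using deg by (simp add: degle_def)
  then show False using mdmu kD by (simp add: mdeg_add)
qed

lemma int_monomial:
  "((\<lambda>s. (1 - s) * s ^ p) has_integral 1 / ((real p + 1) * (real p + 2))) {0..1::real}"
proof -
  define F where "F = (\<lambda>s::real. s ^ (p + 1) / (real p + 1) - s ^ (p + 2) / (real p + 2))"
  have "((\<lambda>s. (1 - s) * s ^ p) has_integral F 1 - F 0) {0..1::real}"
  proof (rule fundamental_theorem_of_calculus)
    fix x :: real assume "x \<in> {0..1}"
    show "(F has_vector_derivative (1 - x) * x ^ p) (at x within {0..1})"
    proof -
      have "(F has_real_derivative (real (p+1) * x ^ (p + 1 - Suc 0) / (real p + 1)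
          - real (p+2) * x ^ (p + 2 - Suc 0) / (real p + 2))) (at x)"
        unfolding F_def by (intro DERIV_diff DERIV_cdivide DERIV_pow)
      moreover have "real (p+1) * x ^ (p + 1 - Suc 0) / (real p + 1)
          - real (p+2) * x ^ (p + 2 - Suc 0) / (real p + 2) = (1 - x) * x ^ p"
      proof -
        have e1: "real (p+1) * x ^ (p + 1 - Suc 0) / (real p + 1) = x ^ p"
          by (simp add: add.commute)
        have e2: "real (p+2) * x ^ (p + 2 - Suc 0) / (real p + 2) = x * x ^ p"
          by (simp add: add.commute)
        show ?thesis by (simp only: e1 e2) (simp add: algebra_simps)
      qed
      ultimately have "(F has_real_derivative (1 - x) * x ^ p) (at x)" by simp
      then show "(F has_vector_derivative (1 - x) * x ^ p) (at x within {0..1})"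
        by (simp add: has_real_derivative_iff_has_vector_derivative has_vector_derivative_at_within)
    qed
  qed simp
  also have "F 1 - F 0 = 1 / ((real p + 1) * (real p + 2))"
    by (simp add: F_def field_simps)
  finally show ?thesis .
qed

lemma vars_in_subkeys: "vars_in n w \<Longrightarrow> ks q \<subseteq> ks w \<Longrightarrow> vars_in n q"
  unfolding vars_in_def by blast
lemma degle_subkeys: "degle d w \<Longrightarrow> ks q \<subseteq> ks w \<Longrightarrow> degle d q"
  unfolding degle_def by blast

lemma weighted_sq_nonneg:
  fixes m :: "mon \<Rightarrow> real" and w :: mpoly
  assumes psd: "\<And>q. vars_in n q \<Longrightarrow> degle k q \<Longrightarrow> 0 \<le> Lm m (q * q)"
    and vw: "vars_in n w" and dw: "degle k w" and pos: "\<And>b. b \<in> ks w \<Longrightarrow> 1 \<le> mdeg b"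
  shows "0 \<le> Lm (\<lambda>a. m a / (real (mdeg a) * (real (mdeg a) - 1))) (w * w)"
proof -
  define K where "K = ks w"
  have fK: "finite K" by (simp add: K_def)
  define P where "P = (\<lambda>b c. mdeg b + mdeg c - 2)"
  define Kc where "Kc = (\<lambda>b c. lk w b * lk w c * m (b + c))"
  have eq1: "Lm (\<lambda>a. m a / (real (mdeg a) * (real (mdeg a) - 1))) (w * w)
      = (\<Sum>b\<in>K. \<Sum>c\<in>K. Kc b c * (1 / ((real (P b c) + 1) * (real (P b c) + 2))))"
  proof -
    have "Lm (\<lambda>a. m a / (real (mdeg a) * (real (mdeg a) - 1))) (w * w)
      = (\<Sum>b\<in>K. \<Sum>c\<in>K. lk w b * lk w c * (m (b + c) / (real (mdeg (b + c)) * (real (mdeg (b + c)) - 1))))"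
      using fK by (intro Lm_mult) (auto simp: K_def)
    also have "\<dots> = (\<Sum>b\<in>K. \<Sum>c\<in>K. Kc b c * (1 / ((real (P b c) + 1) * (real (P b c) + 2))))"
    proof (intro sum.cong refl)
      fix b c assume "b \<in> K" "c \<in> K"
      then have "1 \<le> mdeg b" "1 \<le> mdeg c" using pos by (auto simp: K_def)
      then have "real (P b c) + 1 = real (mdeg (b + c)) - 1" "real (P b c) + 2 = real (mdeg (b + c))"
        by (auto simp: P_def mdeg_add of_nat_diff)
      then show "lk w b * lk w c * (m (b + c) / (real (mdeg (b + c)) * (real (mdeg (b + c)) - 1)))
          = Kc b c * (1 / ((real (P b c) + 1) * (real (P b c) + 2)))"
        by (simp add: Kc_def mult_ac)
    qed
    finally show ?thesis .
  qed
  have int: "((\<lambda>s. \<Sum>b\<in>K. \<Sum>c\<in>K. Kc b c * ((1 - s) * s ^ P b c)) has_integral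
      (\<Sum>b\<in>K. \<Sum>c\<in>K. Kc b c * (1 / ((real (P b c) + 1) * (real (P b c) + 2))))) {0..1}"
    by (intro has_integral_sum fK has_integral_mult_right int_monomial)
  have nonneg: "0 \<le> (\<Sum>b\<in>K. \<Sum>c\<in>K. Kc b c * ((1 - s) * s ^ P b c))" if s: "s \<in> {0..1::real}" for s
  proof -
    define ws where "ws = (\<Sum>b\<in>K. sg b (lk w b * s ^ (mdeg b - 1)))"
    have kws: "ks ws \<subseteq> K"
      unfolding ws_def using keys_sum[of "\<lambda>b. sg b (lk w b * s ^ (mdeg b - 1))" K] by auto
    have lws: "lk ws b = (if b \<in> K then lk w b * s ^ (mdeg b - 1) else 0)" for b
      using fK by (simp add: ws_def lookup_sum_single)
    have "0 \<le> Lm m (ws * ws)"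
      using kws by (intro psd vars_in_subkeys[OF vw] degle_subkeys[OF dw]) (auto simp: K_def)
    also have "Lm m (ws * ws) = (\<Sum>b\<in>K. \<Sum>c\<in>K. lk ws b * lk ws c * m (b + c))"
      using fK kws by (intro Lm_mult) auto
    also have "\<dots> = (\<Sum>b\<in>K. \<Sum>c\<in>K. Kc b c * s ^ P b c)"
    proof (intro sum.cong refl)
      fix b c assume bc: "b \<in> K" "c \<in> K"
      then have "1 \<le> mdeg b" "1 \<le> mdeg c" using pos by (auto simp: K_def)
      then have "mdeg b - 1 + (mdeg c - 1) = P b c" by (simp add: P_def)
      then have "s ^ (mdeg b - 1) * s ^ (mdeg c - 1) = s ^ P b c"
        by (metis power_add)
      then show "lk ws b * lk ws c * m (b + c) = Kc b c * s ^ P b c"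
        using bc by (simp add: lws Kc_def mult_ac)
    qed
    finally have "0 \<le> (1 - s) * (\<Sum>b\<in>K. \<Sum>c\<in>K. Kc b c * s ^ P b c)"
      using s by simp
    also have "\<dots> = (\<Sum>b\<in>K. \<Sum>c\<in>K. Kc b c * ((1 - s) * s ^ P b c))"
      by (simp add: sum_distrib_left mult_ac)
    finally show ?thesis .
  qed
  have "0 \<le> (\<Sum>b\<in>K. \<Sum>c\<in>K. Kc b c * (1 / ((real (P b c) + 1) * (real (P b c) + 2))))"
    by (rule has_integral_nonneg[OF int]) (use nonneg in auto)
  then show ?thesis using eq1 by simp
qed




lemma mdeg_one_single:
  assumes "mdeg a = 1"
  obtains i where "a = sg i 1" "i \<in> ks a"
proof -
  have "a \<noteq> 0" using assms by auto
  then obtain i where i: "i \<in> ks a" by (metis keys_eq_empty ex_in_conv)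
  have ab: "a = (a - sg i 1) + sg i 1" by (rule mon_split[OF i])
  have "mdeg a = mdeg (a - sg i 1) + 1" using arg_cong[OF ab, of mdeg] by (simp only: mdeg_add mdeg_single)
  then have "mdeg (a - sg i 1) = 0" using assms by simp
  then have "a - sg i 1 = 0" by (simp add: mdeg_eq_0)
  then have "a = sg i 1" using ab by simp
  then show ?thesis by (rule that[OF _ i])
qed

lemma keys_w_pos:
  assumes "b \<in> ks (\<Sum>i<n. Var i * (Q i :: mpoly))"
  shows "1 \<le> mdeg b"
proof -
  have "b \<in> (\<Union>i\<in>{..<n}. ks (Var i * Q i))" by (rule subsetD[OF keys_sum assms])
  then obtain i where "b \<in> ks (Var i * Q i)" by blast
  then have "b \<in> {x + y |x y. x \<in> ks (Var i) \<and> y \<in> ks (Q i)}" by (rule subsetD[OF keys_mult])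
  then obtain c d where "b = c + d" "c \<in> ks (Var i)" by blast
  moreover have "c = sg i 1" using \<open>c \<in> ks (Var i)\<close> by (simp add: Var_def)
  ultimately show ?thesis by (simp add: mdeg_add)
qed

lemma core_jensen:
  fixes m :: "mon \<Rightarrow> real" and G :: mpoly and Q :: "nat \<Rightarrow> nat \<Rightarrow> mpoly"
  assumes m0: "m 0 = 1" and m1: "\<And>i. i < n \<Longrightarrow> m (sg i 1) = 0"
    and psd: "\<And>q. vars_in n q \<Longrightarrow> degle k q \<Longrightarrow> 0 \<le> Lm m (q * q)"
    and vG: "vars_in n G" and dG: "degle (2 * k) G"
    and vQ: "\<And>a i. a < l \<Longrightarrow> i < n \<Longrightarrow> vars_in n (Q a i)"
    and hess: "\<And>i j. i < n \<Longrightarrow> j < n \<Longrightarrow> pd i (pd j G) = (\<Sum>a<l. Q a i * Q a j)"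
  shows "lk G 0 \<le> Lm m G"
proof -
  define w where "w = (\<lambda>a. \<Sum>i<n. Var i * Q a i)"
  define E where "E = Eop n G"
  define m' where "m' = (\<lambda>a. m a / (real (mdeg a) * (real (mdeg a) - 1)))"
  have Esos: "E = (\<Sum>a<l. w a * w a)" unfolding E_def w_def by (rule Eop_sos[OF hess])
  have vw: "vars_in n (w a)" if "a < l" for a
    unfolding w_def using that by (intro vars_in_sum vars_in_mult vars_in_Var vQ) auto
  have vE: "vars_in n E" unfolding Esos by (intro vars_in_sum vars_in_mult vw) auto
  have lE: "lk E a = real (mdeg a) * (real (mdeg a) - 1) * lk G a" if "ks a \<subseteq> {..<n}" for a
    unfolding E_def by (rule lookup_Eop[OF that])
  have kE: "ks E \<subseteq> ks G"
  proof
    fix a assume a: "a \<in> ks E"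
    then have "ks a \<subseteq> {..<n}" using vE by (auto simp: vars_in_def)
    then show "a \<in> ks G" using a lE by (auto simp: in_keys_iff)
  qed
  have dE: "degle (2 * k) (\<Sum>a<l. w a * w a)" using dG kE Esos by (auto simp: degle_def)
  have dw: "\<forall>a\<in>{..<l}. degle k (w a)" by (rule sos_degle[OF _ dE]) simp
  have "0 \<le> (\<Sum>a<l. Lm m' (w a * w a))"
  proof (intro sum_nonneg)
    fix a assume al: "a \<in> {..<l}"
    have vwa: "vars_in n (w a)" using vw al by simp
    have dwa: "degle k (w a)" using dw al by blast
    have pos: "\<And>b. b \<in> ks (w a) \<Longrightarrow> 1 \<le> mdeg b" unfolding w_def by (rule keys_w_pos)
    show "0 \<le> Lm m' (w a * w a)"
      unfolding m'_def by (rule weighted_sq_nonneg[OF psd vwa dwa pos])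
  qed
  also have "\<dots> = Lm m' E" by (simp add: Esos Lm_sum)
  finally have E0: "0 \<le> Lm m' E" .
  define K where "K = insert 0 (ks G)"
  have fK: "finite K" by (simp add: K_def)
  have termw: "lk G a * m a = (if a = 0 then lk G a else 0) + lk E a * m' a" if "a \<in> K" for a
  proof -
    have ka: "ks a \<subseteq> {..<n}" using that vG by (auto simp: K_def vars_in_def)
    show ?thesis
    proof (cases "mdeg a = 0")
      case True then have "a = 0" by (simp add: mdeg_eq_0)
      then show ?thesis using m0 lE[OF ka] by (simp add: m'_def)
    next
      case False
      show ?thesis
      proof (cases "mdeg a = 1")
        case True
        then obtain i where ai: "a = sg i 1" "i \<in> ks a" by (rule mdeg_one_single)
        then have "m a = 0" using ka m1 by auto
        moreover have "a \<noteq> 0" using True by auto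
        ultimately show ?thesis using lE[OF ka] True by (simp add: m'_def)
      next
        case F1: False
        then have "real (mdeg a) * (real (mdeg a) - 1) \<noteq> 0" using False by auto
        moreover have "a \<noteq> 0" using False by auto
        ultimately show ?thesis using lE[OF ka] by (simp add: m'_def)
      qed
    qed
  qed
  have "Lm m G = (\<Sum>a\<in>K. lk G a * m a)" using fK by (intro Lm_superset) (auto simp: K_def)
  also have "\<dots> = (\<Sum>a\<in>K. (if a = 0 then lk G a else 0) + lk E a * m' a)"
    by (rule sum.cong[OF refl]) (rule termw)
  also have "\<dots> = (\<Sum>a\<in>K. if a = 0 then lk G a else 0) + (\<Sum>a\<in>K. lk E a * m' a)"
    by (rule sum.distrib)
  also have "(\<Sum>a\<in>K. if a = 0 then lk G a else 0) = lk G 0"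
    using fK by (simp add: K_def)
  also have "(\<Sum>a\<in>K. lk E a * m' a) = Lm m' E"
    using fK kE by (intro Lm_superset[symmetric]) (auto simp: K_def)
  finally show ?thesis using E0 by simp
qed




lemma finite_Nk: "finite (Nk n s)"
proof (rule inj_on_finite)
  show "inj_on (\<lambda>a. restrict (lk a) {..<n}) (Nk n s)"
  proof (rule inj_onI)
    fix a b assume a: "a \<in> Nk n s" and b: "b \<in> Nk n s"
      and eq: "restrict (lk a) {..<n} = restrict (lk b) {..<n}"
    show "a = b"
    proof (rule poly_mapping_eqI)
      fix i show "lk a i = lk b i"
      proof (cases "i < n")
        case True then show ?thesis using fun_cong[OF eq, of i] by simp
      next
        case False
        then have "i \<notin> ks a" "i \<notin> ks b" using a b by (auto simp: Nk_def)
        then show ?thesis by (simp add: in_keys_iff)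
      qed
    qed
  qed
  show "(\<lambda>a. restrict (lk a) {..<n}) ` Nk n s \<subseteq> PiE {..<n} (\<lambda>_. {..s})"
  proof (rule image_subsetI)
    fix a assume "a \<in> Nk n s"
    then have "mdeg a \<le> s" by (simp add: Nk_def)
    then show "restrict (lk a) {..<n} \<in> PiE {..<n} (\<lambda>_. {..s})"
      using lookup_le_mdeg[of a] by (auto simp: restrict_PiE_iff intro: order_trans)
  qed
  show "finite (PiE {..<n} (\<lambda>_. {..s::nat}))" by (rule finite_PiE) auto
qed

lemma keys_sub_Nk: "vars_in n q \<Longrightarrow> degle k q \<Longrightarrow> ks q \<subseteq> Nk n k"
  by (auto simp: vars_in_def degle_def Nk_def)

lemma pdeg_one: "pdeg (1::mpoly) = 0" by (simp add: pdeg_def)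

lemma loc_entry_one: "loc_entry 1 y b c = y (b + c)"
  by (simp add: loc_entry_def)

lemma loc_psd_one:
  assumes "loc_psd n k 1 y" "vars_in n q" "degle k q"
  shows "0 \<le> Lm y (q * q)"
proof -
  have "0 \<le> (\<Sum>b\<in>Nk n k. \<Sum>c\<in>Nk n k. lk q b * lk q c * loc_entry 1 y b c)"
    using assms(1) by (simp add: loc_psd_def pdeg_one Let_def)
  also have "\<dots> = Lm y (q * q)"
    using keys_sub_Nk[OF assms(2,3)] finite_Nk
    by (simp add: loc_entry_one Lm_mult[of "Nk n k" q "Nk n k" q y])
  finally show ?thesis .
qed

lemma loc_psd_entry0:
  assumes "loc_psd n k f y"
  shows "0 \<le> Lm y f"
proof -
  define s where "s = k - (pdeg f + 1) div 2"
  define v where "v = (\<lambda>b::mon. if b = 0 then 1 else (0::real))"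
  have 0: "0 \<in> Nk n s" by (simp add: Nk_def)
  have "0 \<le> (\<Sum>b\<in>Nk n s. \<Sum>c\<in>Nk n s. v b * v c * loc_entry f y b c)"
    using assms by (simp add: loc_psd_def s_def Let_def)
  also have "\<dots> = loc_entry f y 0 0"
  proof -
    have inner: "(\<Sum>c\<in>Nk n s. v b * v c * loc_entry f y b c) = v b * loc_entry f y b 0" for b
    proof -
      have "(\<Sum>c\<in>Nk n s. v b * v c * loc_entry f y b c)
          = (\<Sum>c\<in>Nk n s. if c = 0 then v b * loc_entry f y b c else 0)"
        by (rule sum.cong) (auto simp: v_def)
      also have "\<dots> = v b * loc_entry f y b 0" using 0 finite_Nk[of n s] by (simp add: sum.delta)
      finally show ?thesis .
    qed
    have "(\<Sum>b\<in>Nk n s. v b * loc_entry f y b 0) = (\<Sum>b\<in>Nk n s. if b = 0 then loc_entry f y b 0 else 0)"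
      by (rule sum.cong) (auto simp: v_def)
    also have "\<dots> = loc_entry f y 0 0" using 0 finite_Nk[of n s] by (simp add: sum.delta)
    finally show ?thesis by (simp add: inner)
  qed
  also have "\<dots> = Lm y f" by (simp add: loc_entry_def Lm_def)
  finally show ?thesis .
qed

lemma peval_mval: "peval f x = (\<Sum>d\<in>ks f. lk f d * mval x d)"
  by (simp add: peval_def mval_def)

lemma loc_psd_point:
  assumes "0 \<le> peval f x"
  shows "loc_psd n k f (mval x)"
proof -
  have le: "loc_entry f (mval x) b c = peval f x * mval x b * mval x c" for b c
    by (simp add: loc_entry_def peval_mval mval_add sum_distrib_left mult_ac)
  show ?thesis unfolding loc_psd_def Let_def
  proof (intro allI)
    fix v :: "mon \<Rightarrow> real"
    let ?N = "Nk n (k - (pdeg f + 1) div 2)"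
    have "(\<Sum>b\<in>?N. \<Sum>c\<in>?N. v b * v c * loc_entry f (mval x) b c)
        = peval f x * ((\<Sum>b\<in>?N. v b * mval x b) * (\<Sum>c\<in>?N. v c * mval x c))"
    proof -
      have "(\<Sum>b\<in>?N. \<Sum>c\<in>?N. v b * v c * loc_entry f (mval x) b c)
          = (\<Sum>b\<in>?N. \<Sum>c\<in>?N. peval f x * ((v b * mval x b) * (v c * mval x c)))"
        by (intro sum.cong refl) (simp only: le mult_ac)
      also have "\<dots> = peval f x * (\<Sum>b\<in>?N. \<Sum>c\<in>?N. (v b * mval x b) * (v c * mval x c))"
        by (simp only: sum_distrib_left)
      also have "\<dots> = peval f x * ((\<Sum>b\<in>?N. v b * mval x b) * (\<Sum>c\<in>?N. v c * mval x c))"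
        by (simp only: sum_product)
      finally show ?thesis .
    qed
    also have "0 \<le> \<dots>" using assms by simp
    finally show "0 \<le> (\<Sum>b\<in>?N. \<Sum>c\<in>?N. v b * v c * loc_entry f (mval x) b c)" by simp
  qed
qed

lemma peval_uminus: "peval (- p) x = - peval p x"
  by (simp add: peval_ev ev_uminus rhom_id)
lemma peval_one: "peval 1 x = 1"
  by (simp add: peval_ev ev_one rhom_id)

lemma Lm_Const: "Lm y (Const c) = c * y 0"
  by (simp add: Const_def Lm_single)

lemma jensen:
  fixes y :: "mon \<Rightarrow> real" and x :: "nat \<Rightarrow> real"
  assumes y0: "y 0 = 1" and yx: "\<And>i. i < n \<Longrightarrow> x i = y (sg i 1)"
    and psdy: "\<And>q. vars_in n q \<Longrightarrow> degle k q \<Longrightarrow> 0 \<le> Lm y (q * q)"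
    and vg: "vars_in n g" and dg: "degle (2 * k) g" and sc: "sos_convex n g"
  shows "peval g x \<le> Lm y g"
proof -
  have ex: "\<exists>(l::nat) (P :: nat \<Rightarrow> nat \<Rightarrow> mpoly). (\<forall>a<l. \<forall>b<n. vars_in n (P a b)) \<and>
      (\<forall>i<n. \<forall>j<n. pd i (pd j g) = (\<Sum>a<l. P a i * P a j))"
    using sc by (simp only: sos_convex_def)
  then obtain l where "\<exists>P :: nat \<Rightarrow> nat \<Rightarrow> mpoly. (\<forall>a<l. \<forall>b<n. vars_in n (P a b)) \<and>
      (\<forall>i<n. \<forall>j<n. pd i (pd j g) = (\<Sum>a<l. P a i * P a j))" ..
  then obtain P where lP: "(\<forall>a<l. \<forall>b<n. vars_in n (P a b)) \<and>
      (\<forall>i<n. \<forall>j<n. pd i (pd j g) = (\<Sum>a<l. P a i * P a j))" ..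
  then have vP: "\<forall>a<l. \<forall>b<n. vars_in n (P a b)"
    and hP: "\<forall>i<n. \<forall>j<n. pd i (pd j g) = (\<Sum>a<l. P a i * P a j)" by simp_all
  define G where "G = tr x g"
  define mm where "mm = (\<lambda>a. Lm y (tr (\<lambda>j. - x j) (sg a 1)))"
  have LG: "Lm mm G = Lm y g"
    by (simp add: mm_def G_def Lm_tr[symmetric] tr_inv)
  have G0: "lk G 0 = peval g x"
    by (simp add: G_def peval_at_zero[symmetric] peval_tr)
  have "lk G 0 \<le> Lm mm G"
  proof (rule core_jensen)
    show "mm 0 = 1" using y0 by (simp add: mm_def Lm_one)
    show "mm (sg i 1) = 0" if "i < n" for i
    proof -
      have "sg (sg i 1) (1::real) = Var i" by (simp add: Var_def)
      then have "mm (sg i 1) = Lm y (Var i + Const (- x i))" by (simp only: mm_def tr_Var)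
      also have "\<dots> = 0" using yx[OF that] y0 by (simp add: Lm_add Lm_Var Lm_Const)
      finally show ?thesis .
    qed
    show "0 \<le> Lm mm (q * q)" if "vars_in n q" "degle k q" for q
    proof -
      have "Lm mm (q * q) = Lm y (tr (\<lambda>j. - x j) q * tr (\<lambda>j. - x j) q)"
        by (simp add: mm_def Lm_tr[symmetric] tr_mult)
      also have "0 \<le> \<dots>" using that by (intro psdy vars_in_tr degle_tr)
      finally show ?thesis .
    qed
    show "vars_in n G" unfolding G_def by (rule vars_in_tr[OF vg])
    show "degle (2 * k) G" unfolding G_def by (rule degle_tr[OF dg])
    show "vars_in n (tr x (P a i))" if "a < l" "i < n" for a i
      using vP that by (intro vars_in_tr) auto
    show "pd i (pd j G) = (\<Sum>a<l. tr x (P a i) * tr x (P a j))" if "i < n" "j < n" for i j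
      using hP that by (simp add: G_def pd_tr tr_sum tr_mult)
  qed
  then show ?thesis using LG G0 by simp
qed




theorem theorem2p7:
  fixes n m r t :: nat
    and f :: "nat \<Rightarrow> mpoly" and g :: "nat \<Rightarrow> mpoly" and h :: "nat \<Rightarrow> mpoly"
    and A :: "nat \<Rightarrow> nat \<Rightarrow> real"
    and C H :: "(nat \<Rightarrow> real) set"
    and d :: nat
    and S :: "nat \<Rightarrow> (nat \<Rightarrow> real) set"
  assumes f_vars: "\<forall>i\<in>{1..r}. vars_in n (f i)"
    and g_vars: "\<forall>j\<in>{1..t}. vars_in m (g j)"
    and h_def: "\<forall>j\<in>{1..t}. h j = lin_subst n A (g j)"
    and C_def: "C = {x \<in> Rn n. \<forall>i\<in>{1..r}. peval (f i) x \<ge> 0}"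
    and H_def: "H = {x \<in> Rn n. \<forall>j\<in>{1..t}. peval (h j) x \<ge> 0}"
    and d_def: "d = Max ({0} \<union> (\<lambda>i. (pdeg (f i) + 1) div 2) ` {1..r}
                             \<union> (\<lambda>j. (pdeg (h j) + 1) div 2) ` {1..t})"
    and S_def: "\<forall>k. S k = {x \<in> Rn n. \<exists>y :: mon \<Rightarrow> real.
                   y 0 = 1 \<and> (\<forall>i<n. x i = y (Poly_Mapping.single i 1)) \<and>
                   loc_psd n k 1 y \<and>
                   (\<forall>i\<in>{1..r}. loc_psd n k (f i) y) \<and>
                   (\<forall>j\<in>{1..t}. loc_psd n k (h j) y)}"
    and f_conc: "\<forall>i\<in>{1..r}. sos_concave n (f i)"
    and h_conc: "\<forall>j\<in>{1..t}. sos_concave n (h j)"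
  shows "\<forall>k\<ge>d. S k = C \<inter> H"
proof (intro allI impI)
  fix k assume kd: "d \<le> k"
  let ?D = "{0} \<union> (\<lambda>i. (pdeg (f i) + 1) div 2) ` {1..r} \<union> (\<lambda>j. (pdeg (h j) + 1) div 2) ` {1..t}"
  have finD: "finite ?D" by simp
  have fdeg: "degle (2 * k) (f i)" if "i \<in> {1..r}" for i
  proof -
    have "(pdeg (f i) + 1) div 2 \<le> d" unfolding d_def using that finD by (intro Max_ge) auto
    then have "pdeg (f i) \<le> 2 * k" using kd by linarith
    then show ?thesis by (rule degle_mono[OF degle_pdeg])
  qed
  have hdeg: "degle (2 * k) (h j)" if "j \<in> {1..t}" for j
  proof -
    have "(pdeg (h j) + 1) div 2 \<le> d" unfolding d_def using that finD by (intro Max_ge) auto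
    then have "pdeg (h j) \<le> 2 * k" using kd by linarith
    then show ?thesis by (rule degle_mono[OF degle_pdeg])
  qed
  have hvars: "vars_in n (h j)" if "j \<in> {1..t}" for j
  proof -
    have "h j = ev (\<lambda>i. \<Sum>k<n. Const (A i k) * Var k) Const (g j)"
      using h_def that by (simp add: lin_subst_def ev_def mval_def)
    also have "vars_in n \<dots>"
      using g_vars that by (intro vars_in_ev[of m] vars_in_sum vars_in_mult vars_in_Const vars_in_Var) auto
    finally show ?thesis .
  qed
  have key: "0 \<le> peval p x"
    if "x \<in> Rn n" "y 0 = 1" "\<forall>i<n. x i = y (sg i 1)" "loc_psd n k 1 y" "loc_psd n k p y"
       "vars_in n p" "degle (2 * k) p" "sos_concave n p" for p x y
  proof -
    have "peval (- p) x \<le> Lm y (- p)"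
    proof (rule jensen)
      show "y 0 = 1" by (rule that(2))
      show "x i = y (sg i 1)" if "i < n" for i using that \<open>\<forall>i<n. x i = y (sg i 1)\<close> by simp
      show "0 \<le> Lm y (q * q)" if "vars_in n q" "degle k q" for q
        by (rule loc_psd_one[OF \<open>loc_psd n k 1 y\<close> that])
      show "vars_in n (- p)" using that(6) by simp
      show "degle (2 * k) (- p)" using that(7) by simp
      show "sos_convex n (- p)" using that(8) by (simp add: sos_concave_def)
    qed
    moreover have "0 \<le> Lm y p" by (rule loc_psd_entry0[OF that(5)])
    ultimately show ?thesis by (simp add: peval_uminus Lm_uminus)
  qed
  show "S k = C \<inter> H"
  proof (intro equalityI subsetI)
    fix x assume "x \<in> S k"
    then obtain y where xR: "x \<in> Rn n" and y0: "y 0 = 1" and yx: "\<forall>i<n. x i = y (sg i 1)"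
      and l1: "loc_psd n k 1 y" and lf: "\<forall>i\<in>{1..r}. loc_psd n k (f i) y"
      and lh: "\<forall>j\<in>{1..t}. loc_psd n k (h j) y"
      using S_def by auto
    have "\<forall>i\<in>{1..r}. 0 \<le> peval (f i) x"
      using key[OF xR y0 yx l1] lf f_vars fdeg f_conc by blast
    moreover have "\<forall>j\<in>{1..t}. 0 \<le> peval (h j) x"
      using key[OF xR y0 yx l1] lh hvars hdeg h_conc by blast
    ultimately show "x \<in> C \<inter> H" using xR C_def H_def by auto
  next
    fix x assume "x \<in> C \<inter> H"
    then have xR: "x \<in> Rn n" and pf: "\<forall>i\<in>{1..r}. 0 \<le> peval (f i) x"
      and ph: "\<forall>j\<in>{1..t}. 0 \<le> peval (h j) x"
      using C_def H_def by auto
    have "mval x 0 = 1" "\<forall>i<n. x i = mval x (sg i 1)" by simp_all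
    moreover have "loc_psd n k 1 (mval x)" by (rule loc_psd_point) (simp add: peval_one)
    moreover have "\<forall>i\<in>{1..r}. loc_psd n k (f i) (mval x)" using pf by (simp add: loc_psd_point)
    moreover have "\<forall>j\<in>{1..t}. loc_psd n k (h j) (mval x)" using ph by (simp add: loc_psd_point)
    ultimately show "x \<in> S k" using xR S_def by blast
  qed
qed


end
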